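(* Let $L>0$, $D\subseteq\mathbb{R}$ compact, and let $w$ be a null sequence. Let $\mathcal{M}_w$ be a set of filters of the form $M_h^T$, where $T$ is a convergent input-dependent CPTP map on some number $n$ of qubits and $h:\mathcal{D}(\mathbb{C}^{2^n})\to\mathbb{R}$, each of which is a $w$-fading memory filter, and let $\mathcal{F}_w$ be the family of corresponding $w$-fading memory functionals $F_h^T$ on $K_L^-(D)$. If $\mathcal{F}_w$ is a (polynomial) subalgebra of $C(K_L^-(D),\|\cdot\|_w)$ (closed under sums, real scalar multiples and products), contains the constant functionals, and separates points of $K_L^-(D)$, then $\mathcal{F}_w$ is dense in $C(K_L^-(D),\|\cdot\|_w)$ (with respect to the supremum norm). That is, for any $w$-fading memory (time-invariant, causal) filter $M_*:K_L(D)\to\mathbb{R}^{\mathbb{Z}}$ and any $\epsilon>0$, there exists $M_h^T\in\mathcal{M}_w$ such that for all $u\in K_L(D)$, $\sup_{k\in\mathbb{Z}}|M_*(u)_k-M_h^T(u)_k|<\epsilon$.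
   Context: $K_L(D)$: real sequences $u=\{u_k\}_{k\in\mathbb{Z}}$ with $u_k\in D\cap[-L,L]$; $K_L^-(D)$: such sequences indexed by $\mathbb{Z}^-=\{\dots,-1,0\}$. An input-dependent CPTP map $T$ on $n$ qubits assigns to each $x\in D\cap[-L,L]$ a CPTP map $T(x)$ on $2^n\times2^n$ matrices; it is convergent w.r.t. $K_L(D)$ if there is $\delta_k\to0$ such that for every input $\{u_k\}_{k\ge1}$ in $D\cap[-L,L]$ and any two density-operator sequences with $\rho_{j,k}=T(u_k)\rho_{j,k-1}$, $\|\rho_{1,k}-\rho_{2,k}\|_2\le\delta_k$ (Schatten 2-norm). The induced filter is $M_h^T(u)_k=h\big(\lim_{N\to\infty}T(u_k)T(u_{k-1})\cdots T(u_{k-N})\rho_{-N}\big)$, assumed independent of the initial density operators. A filter $M:K_L(D)\to\mathbb{R}^{\mathbb{Z}}$ is causal if $M(u)_k=M(v)_k$ whenever $u_j=v_j$ for all $j\le k$, and time-invariant if it commutes with the shifts $(M_\tau u)_k=u_{k-\tau}$. Its corresponding functional is $F(u_-)=M(u)_0$ for $u_-\in K_L^-(D)$ and any $u\in K_L(D)$ agreeing with $u_-$ on $\mathbb{Z}^-$; the filter is recovered by $M(u)_k=F(P\circ M_{-k}(u))$, with $P$ truncation to indices $\le0$. A null sequence is a decreasing $w:\{0,1,2,\dots\}\to(0,1]$ with $w_k\to0$; the weighted norm is $\|u\|_w=\sup_{k\in\mathbb{Z}^-}|u_k|w_{-k}$. A time-invariant causal filter is $w$-fading memory iff its functional is continuous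 on $(K_L^-(D),\|\cdot\|_w)$; $C(K_L^-(D),\|\cdot\|_w)$ denotes the real-valued continuous functionals on this space. *)

theory Defs
  imports "HOL-Analysis.Analysis" "Jordan_Normal_Form.Matrix"
begin

definition mtrace :: "complex mat \<Rightarrow> complex" where
  "mtrace A = (\<Sum>i<dim_row A. A $$ (i,i))"

definition psd :: "nat \<Rightarrow> complex mat \<Rightarrow> bool" where
  "psd d A \<longleftrightarrow> A \<in> carrier_mat d d \<and>
     (\<forall>v :: nat \<Rightarrow> complex. let q = (\<Sum>i<d. \<Sum>j<d. cnj (v i) * A $$ (i,j) * v j) in Im q = 0 \<and> Re q \<ge> 0)"

definition density :: "nat \<Rightarrow> complex mat \<Rightarrow> bool" where
  "density n \<rho> \<longleftrightarrow> psd (2^n) \<rho> \<and> mtrace \<rho> = 1"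

definition schatten2 :: "complex mat \<Rightarrow> real" where
  "schatten2 A = sqrt (\<Sum>i<dim_row A. \<Sum>j<dim_col A. (cmod (A $$ (i,j)))\<^sup>2)"

text \<open>Action of (id_k tensor Phi) on a (k d) x (k d) matrix viewed as k x k blocks of size d x d.\<close>
definition ampliate :: "nat \<Rightarrow> nat \<Rightarrow> (complex mat \<Rightarrow> complex mat) \<Rightarrow> complex mat \<Rightarrow> complex mat" where
  "ampliate d k \<Phi> X = mat (k*d) (k*d) (\<lambda>(i,j).
      \<Phi> (mat d d (\<lambda>(r,s). X $$ ((i div d)*d + r, (j div d)*d + s))) $$ (i mod d, j mod d))"

definition CPTP :: "nat \<Rightarrow> (complex mat \<Rightarrow> complex mat) \<Rightarrow> bool" where
  "CPTP d \<Phi> \<longleftrightarrow>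
     (\<forall>A \<in> carrier_mat d d. \<Phi> A \<in> carrier_mat d d) \<and>
     (\<forall>A \<in> carrier_mat d d. \<forall>B \<in> carrier_mat d d. \<Phi> (A + B) = \<Phi> A + \<Phi> B) \<and>
     (\<forall>A \<in> carrier_mat d d. \<forall>c::complex. \<Phi> (c \<cdot>\<^sub>m A) = c \<cdot>\<^sub>m \<Phi> A) \<and>
     (\<forall>A \<in> carrier_mat d d. mtrace (\<Phi> A) = mtrace A) \<and>
     (\<forall>k. \<forall>X. psd (k*d) X \<longrightarrow> psd (k*d) (ampliate d k \<Phi> X))"

definition K :: "real set \<Rightarrow> real \<Rightarrow> (int \<Rightarrow> real) set" where
  "K D L = {u. \<forall>k. u k \<in> D \<inter> {-L..L}}"

text \<open>Left-infinite sequences, indexed by the nonpositive integers; by convention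
  they are extended by 0 on the positive integers.\<close>
definition Kminus :: "real set \<Rightarrow> real \<Rightarrow> (int \<Rightarrow> real) set" where
  "Kminus D L = {u. (\<forall>k\<le>0. u k \<in> D \<inter> {-L..L}) \<and> (\<forall>k>0. u k = 0)}"

definition null_seq :: "(nat \<Rightarrow> real) \<Rightarrow> bool" where
  "null_seq w \<longleftrightarrow> (\<forall>k. w (Suc k) \<le> w k) \<and> (\<forall>k. 0 < w k \<and> w k \<le> 1) \<and> w \<longlonglongrightarrow> 0"

definition wnorm :: "(nat \<Rightarrow> real) \<Rightarrow> (int \<Rightarrow> real) \<Rightarrow> real" where
  "wnorm w u = (SUP k\<in>{..0::int}. \<bar>u k\<bar> * w (nat (- k)))"

definition wcont :: "real set \<Rightarrow> real \<Rightarrow> (nat \<Rightarrow> real) \<Rightarrow> ((int \<Rightarrow> real) \<Rightarrow> real) \<Rightarrow> bool" where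
  "wcont D L w F \<longleftrightarrow> (\<forall>u \<in> Kminus D L. \<forall>\<epsilon>>0. \<exists>\<delta>>0. \<forall>v \<in> Kminus D L.
      wnorm w (\<lambda>k. u k - v k) < \<delta> \<longrightarrow> \<bar>F u - F v\<bar> < \<epsilon>)"

definition shift :: "int \<Rightarrow> (int \<Rightarrow> real) \<Rightarrow> (int \<Rightarrow> real)" where
  "shift \<tau> u = (\<lambda>k. u (k - \<tau>))"

definition causal :: "real set \<Rightarrow> real \<Rightarrow> ((int \<Rightarrow> real) \<Rightarrow> (int \<Rightarrow> real)) \<Rightarrow> bool" where
  "causal D L M \<longleftrightarrow> (\<forall>u \<in> K D L. \<forall>v \<in> K D L. \<forall>k.
      (\<forall>j\<le>k. u j = v j) \<longrightarrow> M u k = M v k)"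

definition time_invariant :: "real set \<Rightarrow> real \<Rightarrow> ((int \<Rightarrow> real) \<Rightarrow> (int \<Rightarrow> real)) \<Rightarrow> bool" where
  "time_invariant D L M \<longleftrightarrow> (\<forall>u \<in> K D L. \<forall>\<tau>. M (shift \<tau> u) = shift \<tau> (M u))"

text \<open>Corresponding functional: F(u_-) = M(u)_0 for any u in K_L(D) extending u_-
  (here: extended by a fixed element of D \<inter> [-L,L] on positive indices).\<close>
definition functional :: "real set \<Rightarrow> real \<Rightarrow> ((int \<Rightarrow> real) \<Rightarrow> (int \<Rightarrow> real)) \<Rightarrow> (int \<Rightarrow> real) \<Rightarrow> real" where
  "functional D L M v = M (\<lambda>k. if k \<le> 0 then v k else (SOME x. x \<in> D \<inter> {-L..L})) 0"

definition fading_memory :: "real set \<Rightarrow> real \<Rightarrow> (nat \<Rightarrow> real) \<Rightarrow> ((int \<Rightarrow> real) \<Rightarrow> (int \<Rightarrow> real)) \<Rightarrow> bool" where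
  "fading_memory D L w M \<longleftrightarrow> time_invariant D L M \<and> causal D L M \<and> wcont D L w (functional D L M)"

definition input_CPTP :: "nat \<Rightarrow> real set \<Rightarrow> real \<Rightarrow> (real \<Rightarrow> complex mat \<Rightarrow> complex mat) \<Rightarrow> bool" where
  "input_CPTP n D L T \<longleftrightarrow> (\<forall>x \<in> D \<inter> {-L..L}. CPTP (2^n) (T x))"

definition convergent_CPTP :: "nat \<Rightarrow> real set \<Rightarrow> real \<Rightarrow> (real \<Rightarrow> complex mat \<Rightarrow> complex mat) \<Rightarrow> bool" where
  "convergent_CPTP n D L T \<longleftrightarrow> (\<exists>\<delta>::nat \<Rightarrow> real. \<delta> \<longlonglongrightarrow> 0 \<and>
     (\<forall>u::nat \<Rightarrow> real. \<forall>\<rho>1 \<rho>2 :: nat \<Rightarrow> complex mat.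
        (\<forall>k\<ge>1. u k \<in> D \<inter> {-L..L}) \<and>
        (\<forall>k. density n (\<rho>1 k) \<and> density n (\<rho>2 k)) \<and>
        (\<forall>k\<ge>1. \<rho>1 k = T (u k) (\<rho>1 (k - 1)) \<and> \<rho>2 k = T (u k) (\<rho>2 (k - 1)))
        \<longrightarrow> (\<forall>k. schatten2 (\<rho>1 k - \<rho>2 k) \<le> \<delta> k)))"

text \<open>chain T u k N \<rho> = T(u_k) T(u_(k-1)) ... T(u_(k-N)) \<rho>.\<close>
fun chain :: "(real \<Rightarrow> complex mat \<Rightarrow> complex mat) \<Rightarrow> (int \<Rightarrow> real) \<Rightarrow> int \<Rightarrow> nat \<Rightarrow> complex mat \<Rightarrow> complex mat" where
  "chain T u k 0 \<rho> = T (u k) \<rho>"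
| "chain T u k (Suc N) \<rho> = chain T u k N (T (u (k - int N - 1)) \<rho>)"

definition mat_tendsto :: "nat \<Rightarrow> (nat \<Rightarrow> complex mat) \<Rightarrow> complex mat \<Rightarrow> bool" where
  "mat_tendsto d A \<Lambda> \<longleftrightarrow> \<Lambda> \<in> carrier_mat d d \<and> (\<lambda>N. schatten2 (A N - \<Lambda>)) \<longlonglongrightarrow> 0"

text \<open>The limit  lim_N T(u_k)...T(u_(k-N)) \<rho>_(-N)  (for density operators \<rho>_(-N)).\<close>
definition limit_state :: "nat \<Rightarrow> (real \<Rightarrow> complex mat \<Rightarrow> complex mat) \<Rightarrow> (int \<Rightarrow> real) \<Rightarrow> int \<Rightarrow> complex mat \<Rightarrow> bool" where
  "limit_state n T u k \<Lambda> \<longleftrightarrow> (\<forall>\<rho>::nat \<Rightarrow> complex mat. (\<forall>N. density n (\<rho> N)) \<longrightarrow>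
      mat_tendsto (2^n) (\<lambda>N. chain T u k N (\<rho> N)) \<Lambda>)"

text \<open>Standing assumption: the limit exists and is independent of the initial density operators.\<close>
definition filter_well_defined :: "nat \<Rightarrow> real set \<Rightarrow> real \<Rightarrow> (real \<Rightarrow> complex mat \<Rightarrow> complex mat) \<Rightarrow> bool" where
  "filter_well_defined n D L T \<longleftrightarrow> (\<forall>u \<in> K D L. \<forall>k. \<exists>\<Lambda>. limit_state n T u k \<Lambda>)"

definition qfilter :: "nat \<Rightarrow> (real \<Rightarrow> complex mat \<Rightarrow> complex mat) \<Rightarrow> (complex mat \<Rightarrow> real) \<Rightarrow> (int \<Rightarrow> real) \<Rightarrow> (int \<Rightarrow> real)" where
  "qfilter n T h u k = h (THE \<Lambda>. limit_state n T u k \<Lambda>)"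

end

theory Submission
  imports Defs
begin

lemma wcont_imp_cont:
  assumes w_null: "null_seq w" and L_pos: "L > 0" and wc: "wcont D L w F"
  shows "continuous_on (Kminus D L) F"
  unfolding continuous_on_def
proof (intro ballI)
  fix u assume u: "u \<in> Kminus D L"
  show "(F \<longlongrightarrow> F u) (at u within Kminus D L)"
  proof (rule tendstoI)
    fix e :: real assume e: "e > 0"
    obtain \<delta> where d: "\<delta> > 0" and hd: "\<forall>v\<in>Kminus D L. wnorm w (\<lambda>k. u k - v k) < \<delta> \<longrightarrow> \<bar>F u - F v\<bar> < e"
      using wc u e unfolding wcont_def by blast
    have wlim: "w \<longlonglongrightarrow> 0" and wdec: "\<And>k. w (Suc k) \<le> w k" and wpos: "\<And>k. 0 < w k \<and> w k \<le> 1"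
      using w_null unfolding null_seq_def by auto
    have "decseq w" using wdec by (simp add: decseq_SucI)
    have "eventually (\<lambda>n. w n < \<delta> / (4*L)) sequentially"
      using order_tendstoD(2)[OF wlim] d L_pos by simp
    then obtain N where N: "w N < \<delta> / (4*L)" unfolding eventually_sequentially by blast
    define U where "U = (\<Inter>k\<in>{-int N..0}. (\<lambda>v. v k) -` ball (u k) (\<delta>/2))"
    have "open U" unfolding U_def
      by (intro open_INT finite_atLeastAtMost_int ballI open_vimage open_ball continuous_on_product_coordinates)
    moreover have "u \<in> U" using d by (simp add: U_def)
    moreover have "\<forall>v\<in>U. v \<in> Kminus D L \<and> v \<noteq> u \<longrightarrow> dist (F v) (F u) < e"
    proof (intro ballI impI)
      fix v assume vU: "v \<in> U" and vK: "v \<in> Kminus D L \<and> v \<noteq> u"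
      have "wnorm w (\<lambda>k. u k - v k) \<le> \<delta>/2"
        unfolding wnorm_def
      proof (rule cSUP_least)
        show "{..0::int} \<noteq> {}" by auto
      next
        fix k :: int assume k: "k \<in> {..0}"
        show "\<bar>u k - v k\<bar> * w (nat (- k)) \<le> \<delta> / 2"
        proof (cases "k \<ge> - int N")
          case True
          then have "dist (u k) (v k) < \<delta>/2" using vU k unfolding U_def by auto
          then have a: "\<bar>u k - v k\<bar> < \<delta>/2" by (simp add: dist_real_def)
          have "\<bar>u k - v k\<bar> * w (nat (- k)) \<le> \<bar>u k - v k\<bar>"
            using wpos[of "nat (-k)"] by (simp add: mult_left_le)
          then show ?thesis using a by linarith
        next
          case False
          have "u k \<in> {-L..L}" "v k \<in> {-L..L}" using u vK k unfolding Kminus_def by auto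
          then have a: "\<bar>u k - v k\<bar> \<le> 2*L" by auto
          have "N \<le> nat (-k)" using False by linarith
          then have b: "w (nat (-k)) \<le> w N" using \<open>decseq w\<close> by (simp add: decseqD)
          have "\<bar>u k - v k\<bar> * w (nat (- k)) \<le> (2*L) * w N"
            using a b wpos[of "nat (-k)"] by (intro mult_mono) auto
          also have "\<dots> \<le> (2*L) * (\<delta> / (4*L))" using N L_pos by (intro mult_left_mono) auto
          also have "\<dots> = \<delta>/2" using L_pos by simp
          finally show ?thesis .
        qed
      qed
      then have "wnorm w (\<lambda>k. u k - v k) < \<delta>" using d by linarith
      then have "\<bar>F u - F v\<bar> < e" using hd vK by blast
      then show "dist (F v) (F u) < e" by (simp add: dist_real_def abs_minus_commute)
    qed
    ultimately show "eventually (\<lambda>v. dist (F v) (F u) < e) (at u within Kminus D L)"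
      unfolding eventually_at_topological by blast
  qed
qed

lemma l1: "Kminus D L = PiE UNIV (\<lambda>k::int. if k \<le> 0 then D \<inter> {-L..L} else {0::real})"
proof -
  have "u \<in> Kminus D L \<longleftrightarrow> u \<in> PiE UNIV (\<lambda>k::int. if k \<le> 0 then D \<inter> {-L..L} else {0::real})" for u
    unfolding Kminus_def PiE_UNIV_domain Pi_iff mem_Collect_eq
    by (metis UNIV_I insertCI not_le singletonD)
  then show ?thesis by blast
qed
lemma l2: "compact D \<Longrightarrow> compactin euclidean ((\<lambda>k::int. if k \<le> 0 then D \<inter> {-L..L} else {0::real}) i)"
  unfolding compactin_euclidean_iff by (simp add: compact_Int_closed)
lemma l3: "(\<And>i. compactin euclidean (S i)) \<Longrightarrow> compactin (product_topology (\<lambda>_. euclidean) UNIV) (PiE UNIV (S::int \<Rightarrow> real set))"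
  by (simp add: compactin_PiE)
lemma l4: "compactin (product_topology (\<lambda>_. euclidean) UNIV) (PiE UNIV (S::int \<Rightarrow> real set)) \<Longrightarrow> compact (PiE UNIV S)"
  unfolding euclidean_product_topology compactin_euclidean_iff .

lemma Kminus_compact:
  assumes "compact D"
  shows "compact (Kminus D L)"
  unfolding l1 by (rule l4, rule l3, rule l2[OF assms])

lemma fm_eval:
  assumes ti: "time_invariant D L M" and ca: "causal D L M" and u: "u \<in> K D L"
  shows "M u k = functional D L M (\<lambda>j. if j \<le> 0 then u (j+k) else 0)"
proof -
  define x0 where "x0 = (SOME x. x \<in> D \<inter> {-L..L})"
  have "u 0 \<in> D \<inter> {-L..L}" using u unfolding K_def by auto
  then have x0: "x0 \<in> D \<inter> {-L..L}" unfolding x0_def by (rule someI)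
  define u' where "u' = (\<lambda>j::int. if j \<le> 0 then u (j+k) else x0)"
  have f: "functional D L M (\<lambda>j. if j \<le> 0 then u (j+k) else 0) = M u' 0"
    unfolding functional_def u'_def x0_def by (intro arg_cong[where f="\<lambda>f. M f 0"] ext) simp
  have sh: "shift (-k) u = (\<lambda>j. u (j+k))" unfolding shift_def by simp
  have "M (shift (-k) u) = shift (-k) (M u)" using ti u unfolding time_invariant_def by blast
  then have 1: "M (\<lambda>j. u (j+k)) 0 = M u k" unfolding sh by (simp add: shift_def fun_eq_iff)
  have shK: "(\<lambda>j. u (j+k)) \<in> K D L" using u unfolding K_def by auto
  have u'K: "u' \<in> K D L" using u x0 unfolding K_def u'_def by auto
  have cs: "\<And>a b i. a \<in> K D L \<Longrightarrow> b \<in> K D L \<Longrightarrow> (\<forall>j\<le>i. a j = b j) \<Longrightarrow> M a i = M b i"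
    using ca unfolding causal_def by blast
  have ag: "\<forall>j\<le>0. (\<lambda>j. u (j+k)) j = u' j" by (simp add: u'_def)
  have "M (\<lambda>j. u (j+k)) 0 = M u' 0"
    by (rule cs[OF shK u'K ag])
  then show ?thesis using 1 f by simp
qed

theorem theorem3:
  fixes D :: "real set" and L :: real and w :: "nat \<Rightarrow> real"
    and Fw :: "((int \<Rightarrow> real) \<Rightarrow> real) set"
    and \<M> :: "(nat \<times> (real \<Rightarrow> complex mat \<Rightarrow> complex mat) \<times> (complex mat \<Rightarrow> real)) set"
  assumes L_pos: "L > 0"
    and D_compact: "compact D"
    and w_null: "null_seq w"
    and family: "\<forall>(n, T, h) \<in> \<M>. input_CPTP n D L T \<and> convergent_CPTP n D L T \<and>
                    filter_well_defined n D L T \<and> fading_memory D L w (qfilter n T h)"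
    and Fw_def: "Fw = (\<lambda>(n, T, h). functional D L (qfilter n T h)) ` \<M>"
    and sums: "\<forall>F \<in> Fw. \<forall>G \<in> Fw. \<exists>H \<in> Fw. \<forall>v \<in> Kminus D L. H v = F v + G v"
    and scal: "\<forall>F \<in> Fw. \<forall>c::real. \<exists>H \<in> Fw. \<forall>v \<in> Kminus D L. H v = c * F v"
    and prods: "\<forall>F \<in> Fw. \<forall>G \<in> Fw. \<exists>H \<in> Fw. \<forall>v \<in> Kminus D L. H v = F v * G v"
    and constants: "\<forall>c::real. \<exists>H \<in> Fw. \<forall>v \<in> Kminus D L. H v = c"
    and separates: "\<forall>v \<in> Kminus D L. \<forall>v' \<in> Kminus D L. v \<noteq> v' \<longrightarrow> (\<exists>F \<in> Fw. F v \<noteq> F v')"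
  shows "(\<forall>F. wcont D L w F \<longrightarrow> (\<forall>\<epsilon>>0. \<exists>G \<in> Fw.
            \<exists>c < \<epsilon>. \<forall>v \<in> Kminus D L. \<bar>F v - G v\<bar> \<le> c))
       \<and> (\<forall>Mstar. fading_memory D L w Mstar \<longrightarrow> (\<forall>\<epsilon>>0. \<exists>(n, T, h) \<in> \<M>.
            \<forall>u \<in> K D L. \<exists>c < \<epsilon>. \<forall>k. \<bar>Mstar u k - qfilter n T h u k\<bar> \<le> c))"
proof -
  define S where "S = Kminus D L"
  define R where "R = {f. \<exists>G\<in>Fw. \<forall>v\<in>S. f v = G v}"
  have Fw_cont: "continuous_on S G" if G_in: "G \<in> Fw" for G
  proof -
    obtain n T h where "(n, T, h) \<in> \<M>" and G: "G = functional D L (qfilter n T h)"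
      using G_in unfolding Fw_def by auto
    then have "fading_memory D L w (qfilter n T h)" using family by auto
    then have "wcont D L w G" unfolding fading_memory_def G by simp
    then show ?thesis unfolding S_def using wcont_imp_cont w_null L_pos by blast
  qed
  interpret fr: function_ring_on R S
  proof
    show "compact S" unfolding S_def using D_compact by (rule Kminus_compact)
  next
    fix f assume "f \<in> R"
    then obtain G where G: "G \<in> Fw" "\<forall>v\<in>S. f v = G v" unfolding R_def by blast
    have "continuous_on S f \<longleftrightarrow> continuous_on S G" by (rule continuous_on_cong) (use G(2) in auto)
    then show "continuous_on S f" using Fw_cont[OF G(1)] by simp
  next
    fix f g assume "f \<in> R" "g \<in> R"
    then obtain F G where "F \<in> Fw" "\<forall>v\<in>S. f v = F v" "G \<in> Fw" "\<forall>v\<in>S. g v = G v"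
      unfolding R_def by blast
    moreover obtain H where H: "H \<in> Fw" "\<forall>v\<in>S. H v = F v + G v"
      using sums calculation unfolding S_def by blast
    ultimately show "(\<lambda>x. f x + g x) \<in> R" unfolding R_def using H by (auto intro!: bexI[of _ H])
  next
    fix f g assume "f \<in> R" "g \<in> R"
    then obtain F G where "F \<in> Fw" "\<forall>v\<in>S. f v = F v" "G \<in> Fw" "\<forall>v\<in>S. g v = G v"
      unfolding R_def by blast
    moreover obtain H where H: "H \<in> Fw" "\<forall>v\<in>S. H v = F v * G v"
      using prods calculation unfolding S_def by blast
    ultimately show "(\<lambda>x. f x * g x) \<in> R" unfolding R_def using H by (auto intro!: bexI[of _ H])
  next
    fix c :: real
    obtain H where "H \<in> Fw" "\<forall>v\<in>S. H v = c"
      using constants unfolding S_def by blast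
    then show "(\<lambda>_. c) \<in> R" unfolding R_def by auto
  next
    fix x y assume "x \<in> S" "y \<in> S" "x \<noteq> y"
    then obtain F where "F \<in> Fw" "F x \<noteq> F y" using separates unfolding S_def by blast
    moreover have "F \<in> R" using \<open>F \<in> Fw\<close> unfolding R_def by blast
    ultimately show "\<exists>f\<in>R. f x \<noteq> f y" by blast
  qed
  have P1: "\<forall>F. wcont D L w F \<longrightarrow> (\<forall>\<epsilon>>0. \<exists>G \<in> Fw.
            \<exists>c < \<epsilon>. \<forall>v \<in> Kminus D L. \<bar>F v - G v\<bar> \<le> c)"
  proof (intro allI impI)
    fix F :: "(int \<Rightarrow> real) \<Rightarrow> real" and \<epsilon> :: real
    assume wc: "wcont D L w F" and e: "\<epsilon> > 0"
    have cF: "continuous_on S F" unfolding S_def using wcont_imp_cont[OF w_null L_pos wc] .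
    have e2: "\<epsilon>/2 > 0" using e by simp
    obtain g where g: "g \<in> R" "\<forall>x\<in>S. \<bar>F x - g x\<bar> < \<epsilon>/2"
      using fr.Stone_Weierstrass_basic[OF cF e2] by blast
    then obtain G where G: "G \<in> Fw" "\<forall>v\<in>S. g v = G v" unfolding R_def by blast
    have "\<forall>v\<in>Kminus D L. \<bar>F v - G v\<bar> \<le> \<epsilon>/2"
    proof
      fix v assume "v \<in> Kminus D L"
      then have "v \<in> S" unfolding S_def .
      then have "\<bar>F v - g v\<bar> < \<epsilon>/2" "g v = G v" using g G by auto
      then show "\<bar>F v - G v\<bar> \<le> \<epsilon>/2" by simp
    qed
    moreover have "\<epsilon>/2 < \<epsilon>" using e by simp
    ultimately have "\<exists>c < \<epsilon>. \<forall>v \<in> Kminus D L. \<bar>F v - G v\<bar> \<le> c" by blast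
    then show "\<exists>G \<in> Fw. \<exists>c < \<epsilon>. \<forall>v \<in> Kminus D L. \<bar>F v - G v\<bar> \<le> c" using G(1) by blast
  qed
  have P2: "\<forall>Mstar. fading_memory D L w Mstar \<longrightarrow> (\<forall>\<epsilon>>0. \<exists>(n, T, h) \<in> \<M>.
            \<forall>u \<in> K D L. \<exists>c < \<epsilon>. \<forall>k. \<bar>Mstar u k - qfilter n T h u k\<bar> \<le> c)"
  proof (intro allI impI)
    fix Mstar and \<epsilon> :: real
    assume fm: "fading_memory D L w Mstar" and e: "\<epsilon> > 0"
    then have "wcont D L w (functional D L Mstar)" unfolding fading_memory_def by simp
    then obtain G c where G: "G \<in> Fw" "c < \<epsilon>" "\<forall>v \<in> Kminus D L. \<bar>functional D L Mstar v - G v\<bar> \<le> c"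
      using P1 e by blast
    obtain n T h where nTh: "(n, T, h) \<in> \<M>" and Geq: "G = functional D L (qfilter n T h)"
      using G(1) unfolding Fw_def by auto
    have fmq: "fading_memory D L w (qfilter n T h)" using family nTh by auto
    have "\<forall>u \<in> K D L. \<exists>c < \<epsilon>. \<forall>k. \<bar>Mstar u k - qfilter n T h u k\<bar> \<le> c"
    proof (intro ballI)
      fix u assume u: "u \<in> K D L"
      have "\<forall>k. \<bar>Mstar u k - qfilter n T h u k\<bar> \<le> c"
      proof
      fix k
      define v where "v = (\<lambda>j::int. if j \<le> 0 then u (j+k) else 0)"
      have vK: "v \<in> Kminus D L" using u unfolding v_def K_def Kminus_def by auto
      have "Mstar u k = functional D L Mstar v"
        unfolding v_def using fm u by (intro fm_eval) (auto simp: fading_memory_def)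
      moreover have "qfilter n T h u k = G v"
        unfolding v_def Geq using fmq u by (intro fm_eval) (auto simp: fading_memory_def)
      ultimately show "\<bar>Mstar u k - qfilter n T h u k\<bar> \<le> c" using G(3) vK by simp
      qed
      then show "\<exists>c < \<epsilon>. \<forall>k. \<bar>Mstar u k - qfilter n T h u k\<bar> \<le> c" using G(2) by blast
    qed
    then show "\<exists>(n, T, h) \<in> \<M>. \<forall>u \<in> K D L. \<exists>c < \<epsilon>. \<forall>k. \<bar>Mstar u k - qfilter n T h u k\<bar> \<le> c"
      using nTh by blast
  qed
  show ?thesis using P1 P2 by blast
qed

end
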